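(* Let $G$ be a connected graph. Then: (i) $\mu_t(G)\ge|\mathcal{S}(G)|$; (ii) if $\mu_t(G)=|\mathcal{S}(G)|$, then $\mu_t(G)=n(G)-|\mathcal{P}(G)|$; (iii) if $\mu_t(G)=n(G)-|\mathcal{P}(G)|$, then $\mu_t(G)=|\mathcal{C}(G)|$.
   Context: All graphs are finite, simple and undirected; $n(G)$ denotes the order of $G$ and $N_G[v]$ the closed neighborhood of $v$. Let $G$ be a connected graph and $X\subseteq V(G)$. Two vertices $x,y\in V(G)$ are $X$-visible if there exists a shortest $x,y$-path in $G$ none of whose internal vertices (i.e., vertices other than $x$ and $y$) belongs to $X$. The set $X$ is a total mutual-visibility set of $G$ if every two vertices of $G$ are $X$-visible (the empty set is allowed). The total mutual-visibility number $\mu_t(G)$ is the maximum cardinality of a total mutual-visibility set of $G$; a $\mu_t(G)$-set is a total mutual-visibility set of cardinality $\mu_t(G)$. $\mathcal{C}(G)$ is the set of vertices belonging to every $\mu_t(G)$-set. A vertex is simplicial if its neighbors induce a complete graph; $\mathcal{S}(G)$ is the set of simplicial vertices of $G$. $\mathcal{P}(G)$ is the set of vertices $v$ for which there exist two distinct vertices $u,w\in V(G)$ with $N_G[u]\cap N_G[w]=\{v\}$ (equivalently, $v$ is the middle vertex of a convex, i.e. geodesically closed, induced path $P_3$). *)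

theory Defs
  imports Main
begin

definition graph :: "'a set \<Rightarrow> ('a \<Rightarrow> 'a \<Rightarrow> bool) \<Rightarrow> bool" where
  "graph V E \<longleftrightarrow> finite V \<and> (\<forall>x y. E x y \<longrightarrow> E y x) \<and> (\<forall>x. \<not> E x x)
     \<and> (\<forall>x y. E x y \<longrightarrow> x \<in> V \<and> y \<in> V)"

definition walk :: "'a set \<Rightarrow> ('a \<Rightarrow> 'a \<Rightarrow> bool) \<Rightarrow> 'a list \<Rightarrow> 'a \<Rightarrow> 'a \<Rightarrow> bool" where
  "walk V E p x y \<longleftrightarrow> p \<noteq> [] \<and> hd p = x \<and> last p = y \<and> set p \<subseteq> V
     \<and> (\<forall>i. Suc i < length p \<longrightarrow> E (p ! i) (p ! Suc i))"

definition connected_graph :: "'a set \<Rightarrow> ('a \<Rightarrow> 'a \<Rightarrow> bool) \<Rightarrow> bool" where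
  "connected_graph V E \<longleftrightarrow> graph V E \<and> V \<noteq> {} \<and> (\<forall>x\<in>V. \<forall>y\<in>V. \<exists>p. walk V E p x y)"

definition dist :: "'a set \<Rightarrow> ('a \<Rightarrow> 'a \<Rightarrow> bool) \<Rightarrow> 'a \<Rightarrow> 'a \<Rightarrow> nat" where
  "dist V E x y = (LEAST n. \<exists>p. walk V E p x y \<and> length p = Suc n)"

definition shortest_path :: "'a set \<Rightarrow> ('a \<Rightarrow> 'a \<Rightarrow> bool) \<Rightarrow> 'a list \<Rightarrow> 'a \<Rightarrow> 'a \<Rightarrow> bool" where
  "shortest_path V E p x y \<longleftrightarrow> walk V E p x y \<and> length p = Suc (dist V E x y)"

definition internal :: "'a list \<Rightarrow> 'a set" where
  "internal p = set (butlast (tl p))"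

definition visible :: "'a set \<Rightarrow> ('a \<Rightarrow> 'a \<Rightarrow> bool) \<Rightarrow> 'a set \<Rightarrow> 'a \<Rightarrow> 'a \<Rightarrow> bool" where
  "visible V E X x y \<longleftrightarrow> (\<exists>p. shortest_path V E p x y \<and> internal p \<inter> X = {})"

definition total_mv_set :: "'a set \<Rightarrow> ('a \<Rightarrow> 'a \<Rightarrow> bool) \<Rightarrow> 'a set \<Rightarrow> bool" where
  "total_mv_set V E X \<longleftrightarrow> X \<subseteq> V \<and> (\<forall>x\<in>V. \<forall>y\<in>V. visible V E X x y)"

definition mu_t :: "'a set \<Rightarrow> ('a \<Rightarrow> 'a \<Rightarrow> bool) \<Rightarrow> nat" where
  "mu_t V E = Max (card ` {X. total_mv_set V E X})"

definition mu_t_set :: "'a set \<Rightarrow> ('a \<Rightarrow> 'a \<Rightarrow> bool) \<Rightarrow> 'a set \<Rightarrow> bool" where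
  "mu_t_set V E X \<longleftrightarrow> total_mv_set V E X \<and> card X = mu_t V E"

definition core_set :: "'a set \<Rightarrow> ('a \<Rightarrow> 'a \<Rightarrow> bool) \<Rightarrow> 'a set" where
  "core_set V E = {v\<in>V. \<forall>X. mu_t_set V E X \<longrightarrow> v \<in> X}"

definition closed_nbh :: "'a set \<Rightarrow> ('a \<Rightarrow> 'a \<Rightarrow> bool) \<Rightarrow> 'a \<Rightarrow> 'a set" where
  "closed_nbh V E v = insert v {u\<in>V. E v u}"

definition simplicial :: "'a set \<Rightarrow> ('a \<Rightarrow> 'a \<Rightarrow> bool) \<Rightarrow> 'a \<Rightarrow> bool" where
  "simplicial V E v \<longleftrightarrow> (\<forall>u w. E v u \<and> E v w \<and> u \<noteq> w \<longrightarrow> E u w)"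

definition simplicial_set :: "'a set \<Rightarrow> ('a \<Rightarrow> 'a \<Rightarrow> bool) \<Rightarrow> 'a set" where
  "simplicial_set V E = {v\<in>V. simplicial V E v}"

definition P_set :: "'a set \<Rightarrow> ('a \<Rightarrow> 'a \<Rightarrow> bool) \<Rightarrow> 'a set" where
  "P_set V E = {v\<in>V. \<exists>u\<in>V. \<exists>w\<in>V. u \<noteq> w \<and> closed_nbh V E u \<inter> closed_nbh V E w = {v}}"

end

theory Submission
  imports Defs
begin

lemma walk_take:
  assumes "walk V E p x y" "i < length p"
  shows "walk V E (take (Suc i) p) x (p!i)"
proof -
  have l: "last (take (Suc i) p) = p!i" using assms(2)
    by (subst last_conv_nth) (auto simp: min_def intro!: arg_cong[where f="nth p"])
  have h: "hd (take (Suc i) p) = x" using assms by (auto simp: walk_def)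
  show ?thesis using assms l h unfolding walk_def
    by (auto dest: in_set_takeD)
qed

lemma walk_drop:
  assumes "walk V E p x y" "j < length p"
  shows "walk V E (drop j p) (p!j) y"
  using assms unfolding walk_def
  by (auto simp: hd_drop_conv_nth dest: in_set_dropD)

lemma walk_app_edge:
  assumes "walk V E p x a" "walk V E q b y" "E a b"
  shows "walk V E (p @ q) x y"
proof -
  have "E ((p@q)!i) ((p@q)!Suc i)" if "Suc i < length (p@q)" for i
  proof -
    consider "Suc i < length p" | "Suc i = length p" | "Suc i > length p" by linarith
    then show ?thesis
    proof cases
      case 1 then show ?thesis using assms(1) by (simp add: nth_append walk_def)
    next
      case 2
      then have "p!i = a" using assms(1) unfolding walk_def by (metis diff_Suc_1 last_conv_nth)
      moreover have "q!0 = b" using assms(2) by (auto simp: walk_def hd_conv_nth)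
      ultimately show ?thesis using 2 assms(3) by (simp add: nth_append)
    next
      case 3
      then obtain k where k: "i = length p + k" using le_Suc_ex by (metis less_Suc_eq_le)
      then show ?thesis using assms(2) that by (auto simp: nth_append walk_def)
    qed
  qed
  then show ?thesis using assms by (auto simp: walk_def)
qed

lemma walk_app_same:
  assumes "walk V E p x a" "walk V E q a y"
  shows "walk V E (p @ tl q) x y"
proof (cases "tl q = []")
  case True
  have "q \<noteq> []" using assms(2) by (simp add: walk_def)
  then obtain c where "q = [c]" using True by (cases q) auto
  then have "y = a" using assms(2) unfolding walk_def by auto
  then show ?thesis using assms True by simp
next
  case False
  have l: "1 < length q" using False by (cases q) auto
  have w: "walk V E (drop 1 q) (q!1) y" using walk_drop[OF assms(2) l] .
  have "q!0 = a" using assms(2) unfolding walk_def by (metis hd_conv_nth)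
  then have "E a (q!1)" using assms(2) l unfolding walk_def by auto
  then show ?thesis using walk_app_edge[OF assms(1) w] by (simp add: drop_Suc)
qed

lemma sp_exists:
  assumes "connected_graph V E" "x \<in> V" "y \<in> V"
  shows "\<exists>p. shortest_path V E p x y"
proof -
  obtain q where q: "walk V E q x y" using assms unfolding connected_graph_def by blast
  then have "q \<noteq> []" by (simp add: walk_def)
  then have "\<exists>n p. walk V E p x y \<and> length p = Suc n" using q
    by (intro exI[of _ "length q - 1"] exI[of _ q]) auto
  then have "\<exists>p. walk V E p x y \<and> length p = Suc (dist V E x y)"
    unfolding dist_def by (rule LeastI_ex)
  then show ?thesis unfolding shortest_path_def by blast
qed

lemma sp_min:
  assumes "shortest_path V E p x y" "walk V E q x y"
  shows "length p \<le> length q"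
proof -
  have q: "q \<noteq> []" using assms(2) by (simp add: walk_def)
  have "dist V E x y \<le> length q - 1" unfolding dist_def
    by (rule Least_le) (use assms(2) q in auto)
  then show ?thesis using assms(1) q unfolding shortest_path_def by (cases q) auto
qed

lemma sp_walk: "shortest_path V E p x y \<Longrightarrow> walk V E p x y"
  by (simp add: shortest_path_def)

lemma sp_distinct:
  assumes "shortest_path V E p x y"
  shows "distinct p"
proof (rule ccontr)
  assume "\<not> distinct p"
  then obtain i j where ij: "i < j" "j < length p" "p!i = p!j"
    by (metis distinct_conv_nth linorder_neqE_nat)
  have w: "walk V E p x y" using sp_walk[OF assms] .
  have "walk V E (take (Suc i) p @ tl (drop j p)) x y"
    using walk_app_same[OF walk_take[OF w, of i] ] walk_drop[OF w ij(2)] ij by auto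
  from sp_min[OF assms this] ij show False by auto
qed

lemma sp_nochord:
  assumes "shortest_path V E p x y" "Suc (Suc i) < length p"
  shows "\<not> E (p!i) (p!Suc (Suc i))"
proof
  assume e: "E (p!i) (p!Suc (Suc i))"
  have w: "walk V E p x y" using sp_walk[OF assms(1)] .
  have "walk V E (take (Suc i) p @ drop (Suc (Suc i)) p) x y"
    using walk_app_edge[OF walk_take[OF w, of i] walk_drop[OF w assms(2)] e] assms(2) by auto
  from sp_min[OF assms(1) this] assms(2) show False by auto
qed

lemma internal_iff:
  "v \<in> internal p \<longleftrightarrow> (\<exists>k. 0 < k \<and> Suc k < length p \<and> p!k = v)"
proof
  assume "v \<in> internal p"
  then obtain i where "i < length (butlast (tl p))" "butlast (tl p) ! i = v"
    unfolding internal_def by (auto simp: in_set_conv_nth)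
  then show "\<exists>k. 0 < k \<and> Suc k < length p \<and> p!k = v"
    by (intro exI[of _ "Suc i"]) (auto simp: nth_butlast nth_tl)
next
  assume "\<exists>k. 0 < k \<and> Suc k < length p \<and> p!k = v"
  then obtain k where k: "0 < k" "Suc k < length p" "p!k = v" by blast
  then obtain i where i: "k = Suc i" by (cases k) auto
  have "butlast (tl p) ! i = v" "i < length (butlast (tl p))"
    using k i by (auto simp: nth_butlast nth_tl)
  then show "v \<in> internal p" unfolding internal_def by (metis nth_mem)
qed

lemma sp_edge:
  assumes "shortest_path V E p x y" "Suc i < length p"
  shows "E (p!i) (p!Suc i)"
  using assms unfolding shortest_path_def walk_def by blast

lemma sp_inV:
  assumes "shortest_path V E p x y" "i < length p"
  shows "p!i \<in> V"
  using assms unfolding shortest_path_def walk_def by (meson nth_mem subsetD)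

lemma simp_not_internal:
  assumes g: "graph V E" and sp: "shortest_path V E p x y" and s: "simplicial V E v"
  shows "v \<notin> internal p"
proof
  assume "v \<in> internal p"
  then obtain k where k: "0 < k" "Suc k < length p" "p!k = v" by (auto simp: internal_iff)
  then obtain i where i: "k = Suc i" by (cases k) auto
  have e1: "E (p!i) v" using sp_edge[OF sp, of i] k i by auto
  have e2: "E v (p!Suc k)" using sp_edge[OF sp, of k] k by auto
  have sym: "E v (p!i)" using e1 g unfolding graph_def by blast
  have "p!i \<noteq> p!Suc k" using sp_distinct[OF sp] k i by (simp add: nth_eq_iff_index_eq)
  then have "E (p!i) (p!Suc k)" using s sym e2 unfolding simplicial_def by blast
  then show False using sp_nochord[OF sp, of i] k i by auto
qed

lemma P_facts:
  assumes g: "graph V E" and uw: "u \<noteq> w"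
    and eq: "closed_nbh V E u \<inter> closed_nbh V E w = {v}"
  shows "E u v \<and> E w v \<and> \<not> E u w \<and> u \<noteq> v \<and> w \<noteq> v \<and> (\<forall>c. E u c \<and> E w c \<longrightarrow> c = v)"
proof -
  have sym: "\<And>a b. E a b \<Longrightarrow> E b a" and inV: "\<And>a b. E a b \<Longrightarrow> a \<in> V \<and> b \<in> V"
    using g unfolding graph_def by blast+
  have v: "v \<in> closed_nbh V E u" "v \<in> closed_nbh V E w" using eq by auto
  have nu: "u \<notin> closed_nbh V E w"
  proof
    assume h: "u \<in> closed_nbh V E w"
    then have "u = v" using eq by (auto simp: closed_nbh_def)
    have "E w u" using h uw by (auto simp: closed_nbh_def)
    then have "w \<in> closed_nbh V E u" using sym inV by (auto simp: closed_nbh_def)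
    then have "w = v" using eq by (auto simp: closed_nbh_def)
    then show False using \<open>u = v\<close> uw by simp
  qed
  have nw: "w \<notin> closed_nbh V E u"
  proof
    assume h: "w \<in> closed_nbh V E u"
    then have "w = v" using eq by (auto simp: closed_nbh_def)
    have "E u w" using h uw by (auto simp: closed_nbh_def)
    then have "u \<in> closed_nbh V E w" using sym inV by (auto simp: closed_nbh_def)
    then show False using nu by simp
  qed
  have "u \<noteq> v" using nu v by auto
  moreover have "w \<noteq> v" using nw v by auto
  moreover have "E u v" using v \<open>u \<noteq> v\<close> by (auto simp: closed_nbh_def)
  moreover have "E w v" using v \<open>w \<noteq> v\<close> by (auto simp: closed_nbh_def)
  moreover have "\<not> E u w" using nw inV by (auto simp: closed_nbh_def)
  moreover have "\<forall>c. E u c \<and> E w c \<longrightarrow> c = v"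
  proof (intro allI impI)
    fix c assume "E u c \<and> E w c"
    then have "c \<in> closed_nbh V E u \<inter> closed_nbh V E w" using inV by (auto simp: closed_nbh_def)
    then show "c = v" using eq by auto
  qed
  ultimately show ?thesis by blast
qed

lemma P_not_in_tmv:
  assumes c: "connected_graph V E" and X: "total_mv_set V E X" and vP: "v \<in> P_set V E"
  shows "v \<notin> X"
proof
  assume vX: "v \<in> X"
  have g: "graph V E" using c by (simp add: connected_graph_def)
  have sym: "\<And>a b. E a b \<Longrightarrow> E b a" and inV: "\<And>a b. E a b \<Longrightarrow> a \<in> V \<and> b \<in> V"
    and irr: "\<And>a. \<not> E a a"
    using g unfolding graph_def by blast+
  obtain u w where uw: "u \<in> V" "w \<in> V" "u \<noteq> w" "closed_nbh V E u \<inter> closed_nbh V E w = {v}"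
    using vP unfolding P_set_def by blast
  note F = P_facts[OF g uw(3) uw(4)]
  obtain p where p: "shortest_path V E p u w" "internal p \<inter> X = {}"
    using X uw unfolding total_mv_set_def visible_def by blast
  have e: "\<forall>i. Suc i < length [u,v,w] \<longrightarrow> E ([u,v,w] ! i) ([u,v,w] ! Suc i)"
  proof (intro allI impI)
    fix i assume "Suc i < length [u,v,w]"
    then have "i = 0 \<or> i = 1" by (simp add: less_Suc_eq)
    then show "E ([u,v,w] ! i) ([u,v,w] ! Suc i)" using F sym by (elim disjE) simp_all
  qed
  have "v \<in> V" using F inV by blast
  then have "walk V E [u, v, w] u w" using uw e unfolding walk_def by simp
  from sp_min[OF p(1) this] have len: "length p \<le> 3" by simp
  have w: "walk V E p u w" using sp_walk[OF p(1)] .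
  have p0: "p!0 = u" using w unfolding walk_def by (metis hd_conv_nth)
  have pl: "p!(length p - 1) = w" using w unfolding walk_def by (metis last_conv_nth)
  have ne: "p \<noteq> []" using w by (simp add: walk_def)
  have "length p \<noteq> 0" using ne by simp
  then consider "length p = 1" | "length p = 2" | "length p = 3" using len by linarith
  then show False
  proof cases
    case 1 then show ?thesis using p0 pl uw by simp
  next
    case 2 then show ?thesis using p0 pl sp_edge[OF p(1), of 0] F by simp
  next
    case 3
    have "E u (p!1)" using p0 sp_edge[OF p(1), of 0] 3 by simp
    moreover have "E (p!1) w" using pl sp_edge[OF p(1), of 1] 3 by (simp add: numeral_eq_Suc)
    ultimately have "p!1 = v" using F sym by meson
    then have "v \<in> internal p" unfolding internal_iff using 3 by (intro exI[of _ 1]) auto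
    then show False using p(2) vX by blast
  qed
qed

lemma S_not_internal:
  assumes "graph V E" "shortest_path V E p x y"
  shows "internal p \<inter> simplicial_set V E = {}"
  using simp_not_internal[OF assms] unfolding simplicial_set_def by blast

lemma S_tmv:
  assumes c: "connected_graph V E"
  shows "total_mv_set V E (simplicial_set V E)"
proof -
  have g: "graph V E" using c by (simp add: connected_graph_def)
  have "\<forall>x\<in>V. \<forall>y\<in>V. \<exists>p. shortest_path V E p x y \<and> internal p \<inter> simplicial_set V E = {}"
    using sp_exists[OF c] S_not_internal[OF g] by blast
  moreover have "simplicial_set V E \<subseteq> V" by (auto simp: simplicial_set_def)
  ultimately show ?thesis unfolding total_mv_set_def visible_def by blast
qed

lemma empty_tmv:
  assumes c: "connected_graph V E"
  shows "total_mv_set V E {}"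
  unfolding total_mv_set_def visible_def using sp_exists[OF c] by auto

lemma notP_tmv:
  assumes c: "connected_graph V E" and vV: "v \<in> V" and vP: "v \<notin> P_set V E"
  shows "total_mv_set V E (insert v (simplicial_set V E))"
proof -
  have g: "graph V E" using c by (simp add: connected_graph_def)
  have sym: "\<And>a b. E a b \<Longrightarrow> E b a" and inV: "\<And>a b. E a b \<Longrightarrow> a \<in> V \<and> b \<in> V"
    and irr: "\<And>a. \<not> E a a"
    using g unfolding graph_def by blast+
  have "visible V E (insert v (simplicial_set V E)) x y" if xy: "x \<in> V" "y \<in> V" for x y
  proof -
    obtain p where p: "shortest_path V E p x y" using sp_exists[OF c xy] by blast
    show ?thesis
    proof (cases "v \<in> internal p")
      case False
      then show ?thesis using S_not_internal[OF g p] p unfolding visible_def by blast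
    next
      case True
      then obtain k where k: "0 < k" "Suc k < length p" "p!k = v" by (auto simp: internal_iff)
      then obtain i where i: "k = Suc i" by (cases k) auto
      define a where "a = p!i"
      define b where "b = p!Suc k"
      have ea: "E a v" using sp_edge[OF p, of i] k i a_def by auto
      have eb: "E v b" using sp_edge[OF p, of k] k b_def by auto
      have aV: "a \<in> V" and bV: "b \<in> V" using ea eb inV by blast+
      have ab: "a \<noteq> b" using sp_distinct[OF p] k i a_def b_def by (simp add: nth_eq_iff_index_eq)
      have nab: "\<not> E a b" using sp_nochord[OF p, of i] k i a_def b_def by auto
      have vin: "v \<in> closed_nbh V E a \<inter> closed_nbh V E b" using ea eb sym vV
        by (auto simp: closed_nbh_def)
      have "closed_nbh V E a \<inter> closed_nbh V E b \<noteq> {v}" using vP aV bV ab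
        unfolding P_set_def using vV by blast
      then obtain cc where cc: "cc \<in> closed_nbh V E a" "cc \<in> closed_nbh V E b" "cc \<noteq> v"
        using vin by blast
      have "cc \<noteq> a"
      proof
        assume "cc = a"
        then have "a \<in> closed_nbh V E b" using cc by simp
        then show False using ab nab sym by (auto simp: closed_nbh_def)
      qed
      have "cc \<noteq> b"
      proof
        assume "cc = b"
        then have "b \<in> closed_nbh V E a" using cc by simp
        then show False using ab nab by (auto simp: closed_nbh_def)
      qed
      have eac: "E a cc" using cc(1) \<open>cc \<noteq> a\<close> by (auto simp: closed_nbh_def)
      have ebc: "E cc b" using cc(2) \<open>cc \<noteq> b\<close> sym by (auto simp: closed_nbh_def)
      have ccV: "cc \<in> V" using eac inV by blast
      define q where "q = p[k := cc]"
      have w: "walk V E p x y" using sp_walk[OF p] .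
      have lq: "length q = length p" by (simp add: q_def)
      have qn: "q \<noteq> []" using w lq by (auto simp: walk_def)
      have hq: "hd q = x"
      proof -
        have "hd q = q!0" using qn by (simp add: hd_conv_nth)
        also have "\<dots> = p!0" using k by (simp add: q_def)
        also have "\<dots> = x" using w unfolding walk_def by (metis hd_conv_nth)
        finally show ?thesis .
      qed
      have lastq: "last q = y"
      proof -
        have "last q = q!(length p - 1)" using qn lq by (simp add: last_conv_nth)
        also have "\<dots> = p!(length p - 1)" using k by (simp add: q_def)
        also have "\<dots> = y" using w unfolding walk_def by (metis last_conv_nth)
        finally show ?thesis .
      qed
      have setq: "set q \<subseteq> V" using w ccV set_update_subset_insert[of p k cc]
        unfolding q_def walk_def by blast
      have eq: "E (q!j) (q!Suc j)" if "Suc j < length q" for j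
      proof -
        consider "j = i" | "j = k" | "j \<noteq> i \<and> j \<noteq> k" by blast
        then show ?thesis
        proof cases
          case 1 then show ?thesis using eac a_def i k by (simp add: q_def)
        next
          case 2 then show ?thesis using ebc b_def k that lq by (simp add: q_def)
        next
          case 3
          then have "Suc j \<noteq> k" using i by auto
          then show ?thesis using 3 sp_edge[OF p, of j] that lq by (simp add: q_def)
        qed
      qed
      have wq: "walk V E q x y" using qn hq lastq setq eq unfolding walk_def by blast
      have spq: "shortest_path V E q x y" using wq lq p unfolding shortest_path_def by simp
      have "v \<notin> set q"
      proof
        assume "v \<in> set q"
        then obtain m where m: "m < length q" "q!m = v" by (auto simp: in_set_conv_nth)
        show False
        proof (cases "m = k")
          case True then show False using m cc(3) k by (simp add: q_def)
        next
          case False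
          then have "p!m = p!k" using m k by (simp add: q_def)
          moreover have "m < length p" "k < length p" using m k lq by auto
          ultimately show False using sp_distinct[OF p] False nth_eq_iff_index_eq by metis
        qed
      qed
      then have "v \<notin> internal q" unfolding internal_def
        by (meson in_set_butlastD list.set_sel(2) qn)
      then show ?thesis using S_not_internal[OF g spq] spq unfolding visible_def by blast
    qed
  qed
  moreover have "insert v (simplicial_set V E) \<subseteq> V" using vV by (auto simp: simplicial_set_def)
  ultimately show ?thesis unfolding total_mv_set_def by blast
qed

theorem proposition3p3:
  fixes V :: "'a set" and E :: "'a \<Rightarrow> 'a \<Rightarrow> bool"
  assumes "connected_graph V E"
  shows "mu_t V E \<ge> card (simplicial_set V E)
    \<and> (mu_t V E = card (simplicial_set V E) \<longrightarrow> mu_t V E = card V - card (P_set V E))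
    \<and> (mu_t V E = card V - card (P_set V E) \<longrightarrow> mu_t V E = card (core_set V E))"
proof -
  note c = assms
  have g: "graph V E" using c by (simp add: connected_graph_def)
  have fV: "finite V" using g by (simp add: graph_def)
  define F where "F = {X. total_mv_set V E X}"
  have "F \<subseteq> Pow V" by (auto simp: F_def total_mv_set_def)
  moreover have "finite (Pow V)" using fV by simp
  ultimately have fF: "finite F" by (rule finite_subset)
  have fcF: "finite (card ` F)" using fF by simp
  have mu: "mu_t V E = Max (card ` F)" by (simp add: mu_t_def F_def)
  have ge: "card X \<le> mu_t V E" if "total_mv_set V E X" for X
    using that fcF mu by (simp add: F_def)
  have PV: "P_set V E \<subseteq> V" by (auto simp: P_set_def)
  have SV: "simplicial_set V E \<subseteq> V" by (auto simp: simplicial_set_def)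
  have XVP: "X \<subseteq> V - P_set V E" if "total_mv_set V E X" for X
    using that P_not_in_tmv[OF c that] by (auto simp: total_mv_set_def)
  have SP: "simplicial_set V E \<subseteq> V - P_set V E" using XVP[OF S_tmv[OF c]] .
  have cardVP: "card (V - P_set V E) = card V - card (P_set V E)"
    using PV fV by (simp add: card_Diff_subset finite_subset)
  have part1: "mu_t V E \<ge> card (simplicial_set V E)" using ge[OF S_tmv[OF c]] .
  have part2: "mu_t V E = card V - card (P_set V E)" if h: "mu_t V E = card (simplicial_set V E)"
  proof -
    have "V - P_set V E \<subseteq> simplicial_set V E"
    proof
      fix v assume v: "v \<in> V - P_set V E"
      show "v \<in> simplicial_set V E"
      proof (rule ccontr)
        assume ns: "v \<notin> simplicial_set V E"
        have fS: "finite (simplicial_set V E)" using SV fV finite_subset by blast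
        have "card (insert v (simplicial_set V E)) = Suc (card (simplicial_set V E))"
          using ns fS by simp
        moreover have "card (insert v (simplicial_set V E)) \<le> mu_t V E"
          using ge[OF notP_tmv[OF c]] v by blast
        ultimately show False using h by simp
      qed
    qed
    then have "simplicial_set V E = V - P_set V E" using SP by (rule subset_antisym[rotated])
    then show ?thesis using h cardVP by simp
  qed
  have part3: "mu_t V E = card (core_set V E)" if h: "mu_t V E = card V - card (P_set V E)"
  proof -
    have "{} \<in> F" using empty_tmv[OF c] by (simp add: F_def)
    then have "card ` F \<noteq> {}" by blast
    then have "mu_t V E \<in> card ` F" using fcF mu Max_in by metis
    then obtain X0 where X0: "total_mv_set V E X0" "card X0 = mu_t V E" by (auto simp: F_def)
    have fVP: "finite (V - P_set V E)" using fV by simp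
    have all: "X = V - P_set V E" if "mu_t_set V E X" for X
    proof -
      have "total_mv_set V E X" "card X = mu_t V E" using that by (auto simp: mu_t_set_def)
      then have "X \<subseteq> V - P_set V E" "card X = card (V - P_set V E)" using XVP h cardVP by auto
      then show ?thesis using card_subset_eq[OF fVP] by blast
    qed
    have m0: "mu_t_set V E X0" using X0 by (simp add: mu_t_set_def)
    have "core_set V E = V - P_set V E"
    proof
      show "core_set V E \<subseteq> V - P_set V E" using m0 all unfolding core_set_def by blast
      show "V - P_set V E \<subseteq> core_set V E" using all unfolding core_set_def by blast
    qed
    then show ?thesis using h cardVP by simp
  qed
  show ?thesis using part1 part2 part3 by blast
qed

end
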